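(* Let $k\ge 1$, $d = 2^k$, and suppose $d-1$ is a prime number. Let $\Omega$ be a set with $d$ elements, $S_d=\mathrm{Aut}(\Omega)$, and let $G \subset S_d$ be a primitive solvable subgroup. Then every element $g \in G$ with $g \neq 1_G$ has at most $2$ fixed points on $\Omega$.
   Context: A subgroup $G \subset \mathrm{Aut}(\Omega)$ is primitive if it is transitive and the stabilizer $G_x$ of a point $x\in\Omega$ is a maximal subgroup of $G$. *)

theory Defs
  imports "HOL-Algebra.Algebra" "HOL-Computational_Algebra.Primes"
begin

definition maximal_subgroup :: "'a set \<Rightarrow> ('a, 'b) monoid_scheme \<Rightarrow> bool" where
  "maximal_subgroup H G \<longleftrightarrow> subgroup H G \<and> H \<noteq> carrier G \<and>
     (\<forall>K. subgroup K G \<and> H \<subseteq> K \<longrightarrow> K = H \<or> K = carrier G)"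

abbreviation perm_subgroup :: "'a set \<Rightarrow> ('a \<Rightarrow> 'a) set \<Rightarrow> ('a \<Rightarrow> 'a) monoid" where
  "perm_subgroup \<Omega> G \<equiv> (BijGroup \<Omega>)\<lparr>carrier := G\<rparr>"

definition transitive_perm_group :: "'a set \<Rightarrow> ('a \<Rightarrow> 'a) set \<Rightarrow> bool" where
  "transitive_perm_group \<Omega> G \<longleftrightarrow> (\<forall>x\<in>\<Omega>. \<forall>y\<in>\<Omega>. \<exists>g\<in>G. g x = y)"

definition primitive_perm_group :: "'a set \<Rightarrow> ('a \<Rightarrow> 'a) set \<Rightarrow> bool" where
  "primitive_perm_group \<Omega> G \<longleftrightarrow> subgroup G (BijGroup \<Omega>) \<and> transitive_perm_group \<Omega> G \<and>
     (\<forall>x\<in>\<Omega>. maximal_subgroup (stabilizer (perm_subgroup \<Omega> G) (\<lambda>g. g) x) (perm_subgroup \<Omega> G))"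

end

theory Submission
  imports Defs
begin

lemma (in group) comm_of_comm_one:
  assumes "a \<in> carrier G" "b \<in> carrier G" "a \<otimes> b \<otimes> inv a \<otimes> inv b = \<one>"
  shows "a \<otimes> b = b \<otimes> a"
proof -
  have "a \<otimes> b = (a \<otimes> b \<otimes> inv a \<otimes> inv b) \<otimes> (b \<otimes> a)"
    using assms(1,2) by (simp add: m_assoc[symmetric]) (simp add: m_assoc)
  thus ?thesis using assms by simp
qed

lemma (in group) derived_normalized:
  assumes S: "subgroup S G" and T: "subgroup T G" "T \<subseteq> S"
    and nT: "\<forall>s\<in>S. \<forall>a\<in>T. s \<otimes> a \<otimes> inv s \<in> T"
  shows "\<forall>s\<in>S. \<forall>a\<in>derived G T. s \<otimes> a \<otimes> inv s \<in> derived G T"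
proof -
  let ?S = "G\<lparr>carrier := S\<rparr>"
  have gS: "group ?S" by (rule subgroup_imp_group[OF S])
  have sT: "subgroup T ?S" by (rule subgroup_incl[OF T(1) S T(2)])
  have "T \<lhd> ?S"
  proof (rule group.normal_invI[OF gS sT])
    fix x h assume "x \<in> carrier ?S" "h \<in> T"
    thus "x \<otimes>\<^bsub>?S\<^esub> h \<otimes>\<^bsub>?S\<^esub> inv\<^bsub>?S\<^esub> x \<in> T"
      using nT S by (simp add: m_inv_consistent)
  qed
  hence "derived ?S T \<lhd> ?S" by (rule group.derived_is_normal[OF gS])
  hence N: "derived G T \<lhd> ?S" using derived_consistent[OF T(2) S] by simp
  show ?thesis
  proof (intro ballI)
    fix s a assume "s \<in> S" "a \<in> derived G T"
    hence "s \<otimes>\<^bsub>?S\<^esub> a \<otimes>\<^bsub>?S\<^esub> inv\<^bsub>?S\<^esub> s \<in> derived G T"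
      using group.normal_invE(2)[OF gS N] by simp
    thus "s \<otimes> a \<otimes> inv s \<in> derived G T" using \<open>s \<in> S\<close> S by simp
  qed
qed

lemma (in group) abelian_normal_sub:
  assumes S: "subgroup S G" and ne: "S \<noteq> {\<one>}" and n: "(derived G ^^ n) S = {\<one>}"
  shows "\<exists>A. subgroup A G \<and> A \<subseteq> S \<and> A \<noteq> {\<one>} \<and> (\<forall>a\<in>A. \<forall>b\<in>A. a \<otimes> b = b \<otimes> a)
            \<and> (\<forall>s\<in>S. \<forall>a\<in>A. s \<otimes> a \<otimes> inv s \<in> A)"
proof -
  define P where "P m = (derived G ^^ m) S" for m
  have sub: "subgroup (P m) G" for m unfolding P_def by (rule exp_of_derived_is_subgroup[OF S])
  have incl: "P m \<subseteq> S" for m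
  proof (induction m)
    case 0 thus ?case by (simp add: P_def)
  next
    case (Suc m) thus ?case unfolding P_def using derived_incl[OF _ S] by simp
  qed
  have nor: "\<forall>s\<in>S. \<forall>a\<in>P m. s \<otimes> a \<otimes> inv s \<in> P m" for m
  proof (induction m)
    case 0 thus ?case using S by (simp add: P_def subgroup.m_closed subgroup.m_inv_closed)
  next
    case (Suc m)
    have "P (Suc m) = derived G (P m)" by (simp add: P_def)
    thus ?case using derived_normalized[OF S sub incl Suc] by simp
  qed
  have ex: "\<exists>m. P m = {\<one>}" using n unfolding P_def by blast
  define n0 where "n0 = (LEAST m. P m = {\<one>})"
  have n0: "P n0 = {\<one>}" unfolding n0_def using ex by (rule LeastI_ex)
  have "n0 \<noteq> 0"
  proof
    assume "n0 = 0" hence "P 0 = {\<one>}" using n0 by simp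
    thus False using ne by (simp add: P_def)
  qed
  then obtain m where m: "n0 = Suc m" using not0_implies_Suc by blast
  have "m < n0" using m by simp
  hence "\<not> P m = {\<one>}" unfolding n0_def by (rule not_less_Least)
  moreover have "P (Suc m) = {\<one>}" using n0 m by simp
  hence D: "derived G (P m) = {\<one>}" by (simp add: P_def)
  have "\<forall>a\<in>P m. \<forall>b\<in>P m. a \<otimes> b = b \<otimes> a"
  proof (intro ballI)
    fix a b assume ab: "a \<in> P m" "b \<in> P m"
    have "a \<otimes> b \<otimes> inv a \<otimes> inv b \<in> derived_set G (P m)"
      using ab by (intro UN_I[OF ab(1)] UN_I[OF ab(2)]) simp
    hence "a \<otimes> b \<otimes> inv a \<otimes> inv b \<in> derived G (P m)"
      unfolding derived_def by (rule generate.incl)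
    hence "a \<otimes> b \<otimes> inv a \<otimes> inv b = \<one>" using D by simp
    moreover have "a \<in> carrier G" "b \<in> carrier G" using ab subgroup.subset[OF sub] by auto
    ultimately show "a \<otimes> b = b \<otimes> a" using comm_of_comm_one by blast
  qed
  ultimately show ?thesis using sub[of m] incl[of m] nor[of m] by (intro exI[of _ "P m"]) simp
qed


lemma (in group) inv_cancel_l: "x \<in> carrier G \<Longrightarrow> y \<in> carrier G \<Longrightarrow> inv x \<otimes> (x \<otimes> y) = y"
  by (simp add: m_assoc[symmetric])

lemma (in group) cancel_inv_l: "x \<in> carrier G \<Longrightarrow> y \<in> carrier G \<Longrightarrow> x \<otimes> (inv x \<otimes> y) = y"
  by (simp add: m_assoc[symmetric])

lemma (in group) prod_subgroup:
  assumes U: "subgroup U G" and S: "subgroup S G" and nU: "\<forall>s\<in>S. \<forall>u\<in>U. s \<otimes> u \<otimes> inv s \<in> U"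
  shows "subgroup {u \<otimes> s | u s. u \<in> U \<and> s \<in> S} G"
proof (rule subgroupI)
  have sU: "U \<subseteq> carrier G" and sS: "S \<subseteq> carrier G" using subgroup.subset[OF U] subgroup.subset[OF S] by auto
  show "{u \<otimes> s | u s. u \<in> U \<and> s \<in> S} \<subseteq> carrier G" using sU sS by auto
  show "{u \<otimes> s | u s. u \<in> U \<and> s \<in> S} \<noteq> {}" using subgroup.one_closed[OF U] subgroup.one_closed[OF S] by blast
next
  fix a assume "a \<in> {u \<otimes> s | u s. u \<in> U \<and> s \<in> S}"
  then obtain u s where a: "a = u \<otimes> s" "u \<in> U" "s \<in> S" by blast
  have c: "u \<in> carrier G" "s \<in> carrier G" using a subgroup.subset[OF U] subgroup.subset[OF S] by auto
  have iS: "inv s \<in> S" "inv u \<in> U" using a subgroup.m_inv_closed[OF U] subgroup.m_inv_closed[OF S] by auto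
  hence cj: "inv s \<otimes> inv u \<otimes> inv (inv s) \<in> U" using nU by blast
  have "inv a = (inv s \<otimes> inv u \<otimes> inv (inv s)) \<otimes> inv s"
    using c a by (simp add: m_assoc inv_mult_group)
  thus "inv a \<in> {u \<otimes> s | u s. u \<in> U \<and> s \<in> S}" using cj iS by blast
next
  fix a b assume "a \<in> {u \<otimes> s | u s. u \<in> U \<and> s \<in> S}" "b \<in> {u \<otimes> s | u s. u \<in> U \<and> s \<in> S}"
  then obtain u s u' s' where a: "a = u \<otimes> s" "u \<in> U" "s \<in> S" and b: "b = u' \<otimes> s'" "u' \<in> U" "s' \<in> S" by blast
  have c: "u \<in> carrier G" "s \<in> carrier G" "u' \<in> carrier G" "s' \<in> carrier G"
    using a b subgroup.subset[OF U] subgroup.subset[OF S] by auto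
  have cj: "s \<otimes> u' \<otimes> inv s \<in> U" using nU a b by blast
  have "a \<otimes> b = (u \<otimes> (s \<otimes> u' \<otimes> inv s)) \<otimes> (s \<otimes> s')"
    using c a b by (simp add: m_assoc inv_cancel_l)
  moreover have "u \<otimes> (s \<otimes> u' \<otimes> inv s) \<in> U" using cj a subgroup.m_closed[OF U] by blast
  moreover have "s \<otimes> s' \<in> S" using a b subgroup.m_closed[OF S] by blast
  ultimately show "a \<otimes> b \<in> {u \<otimes> s | u s. u \<in> U \<and> s \<in> S}" by blast
qed

lemma (in group) conj_pow:
  assumes "a \<in> carrier G" "s \<in> carrier G"
  shows "(s \<otimes> a \<otimes> inv s) [^] (n::nat) = s \<otimes> a [^] n \<otimes> inv s"
proof (induction n)
  case 0 thus ?case using assms by simp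
next
  case (Suc n)
  thus ?case using assms by (simp add: m_assoc inv_cancel_l)
qed


lemma (in group) cauchy_elem:
  assumes fin: "finite (carrier G)" and q: "Factorial_Ring.prime q" and dv: "q dvd order G"
  shows "\<exists>e\<in>carrier G. e \<noteq> \<one> \<and> e [^] q = \<one>"
proof -
  have "order G = q ^ 1 * (order G div q)" using dv by simp
  then obtain P where P: "subgroup P G" "card P = q ^ 1"
    using sylow_thm[OF q is_group _ fin] by blast
  have cP: "card P = q" using P by simp
  have "card (P - {\<one>}) > 0"
  proof -
    have "finite P" using P(1) fin subgroup.subset finite_subset by metis
    hence "card (P - {\<one>}) \<ge> card P - 1" using diff_card_le_card_Diff[of "{\<one>}" P] by simp
    moreover have "q \<ge> 2" using q by (simp add: prime_ge_2_nat)
    ultimately show ?thesis using cP by simp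
  qed
  then obtain e where e: "e \<in> P" "e \<noteq> \<one>"
    by (metis card_gt_0_iff Diff_iff ex_in_conv singletonI)
  have gP: "group (G\<lparr>carrier := P\<rparr>)" by (rule subgroup_imp_group[OF P(1)])
  have "e [^]\<^bsub>G\<lparr>carrier := P\<rparr>\<^esub> order (G\<lparr>carrier := P\<rparr>) = \<one>\<^bsub>G\<lparr>carrier := P\<rparr>\<^esub>"
    using group.pow_order_eq_1[OF gP, of e] e by simp
  hence "e [^] q = \<one>" using cP by (simp add: order_def nat_pow_consistent[symmetric])
  moreover have "e \<in> carrier G" using e P(1) subgroup.subset by blast
  ultimately show ?thesis using e by blast
qed


lemma (in group) comm_inv:
  assumes "a \<in> carrier G" "b \<in> carrier G" "a \<otimes> b = b \<otimes> a"
  shows "a \<otimes> inv b = inv b \<otimes> a"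
proof -
  have "inv b \<otimes> a = inv b \<otimes> (a \<otimes> b) \<otimes> inv b" using assms(1,2) by (simp add: m_assoc)
  also have "... = inv b \<otimes> (b \<otimes> a) \<otimes> inv b" using assms(3) by simp
  also have "... = a \<otimes> inv b" using assms(1,2) by (simp add: m_assoc inv_cancel_l)
  finally show ?thesis by simp
qed

locale pgrp =
  fixes \<Omega> :: "'a set" and G :: "('a \<Rightarrow> 'a) set"
  assumes sub: "subgroup G (BijGroup \<Omega>)" and fin: "finite \<Omega>"
begin

abbreviation "B \<equiv> BijGroup \<Omega>"

sublocale B: group B by (rule group_BijGroup)

lemma inC: "f \<in> G \<Longrightarrow> f \<in> carrier B"
  using subgroup.subset[OF sub] by auto

lemma carrB: "carrier B = Bij \<Omega>" by (simp add: BijGroup_def)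

lemma mapp: "f \<in> carrier B \<Longrightarrow> g \<in> carrier B \<Longrightarrow> y \<in> \<Omega> \<Longrightarrow> (f \<otimes>\<^bsub>B\<^esub> g) y = f (g y)"
  by (simp add: BijGroup_def compose_def)

lemma oneapp: "y \<in> \<Omega> \<Longrightarrow> \<one>\<^bsub>B\<^esub> y = y" by (simp add: BijGroup_def)

lemma appin: "f \<in> carrier B \<Longrightarrow> y \<in> \<Omega> \<Longrightarrow> f y \<in> \<Omega>"
  by (metis carrB Bij_imp_funcset funcset_mem)

lemma exteq: "f \<in> carrier B \<Longrightarrow> g \<in> carrier B \<Longrightarrow> (\<And>y. y \<in> \<Omega> \<Longrightarrow> f y = g y) \<Longrightarrow> f = g"
  by (metis carrB Bij_imp_extensional extensionalityI)

lemma invapp: "f \<in> carrier B \<Longrightarrow> y \<in> \<Omega> \<Longrightarrow> (inv\<^bsub>B\<^esub> f) (f y) = y"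
  by (metis B.inv_closed B.l_inv mapp oneapp)

lemma appinv: "f \<in> carrier B \<Longrightarrow> y \<in> \<Omega> \<Longrightarrow> f ((inv\<^bsub>B\<^esub> f) y) = y"
  by (metis B.inv_closed B.r_inv mapp oneapp)

lemma fixone: "f \<in> carrier B \<Longrightarrow> (\<And>y. y \<in> \<Omega> \<Longrightarrow> f y = y) \<Longrightarrow> f = \<one>\<^bsub>B\<^esub>"
  by (metis exteq B.one_closed oneapp)

lemma injapp: "f \<in> carrier B \<Longrightarrow> y \<in> \<Omega> \<Longrightarrow> z \<in> \<Omega> \<Longrightarrow> f y = f z \<Longrightarrow> y = z"
  by (metis invapp)

lemma finG: "finite G"
proof -
  have "G \<subseteq> extensional_funcset \<Omega> \<Omega>"
  proof
    fix f assume "f \<in> G"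
    hence "f \<in> Bij \<Omega>" using inC carrB by simp
    thus "f \<in> extensional_funcset \<Omega> \<Omega>"
      by (simp add: PiE_def Bij_imp_funcset Bij_imp_extensional)
  qed
  moreover have "finite (extensional_funcset \<Omega> \<Omega>)" by (intro finite_PiE fin)
  ultimately show ?thesis by (rule finite_subset)
qed

lemmas pw = mapp oneapp appin invapp appinv B.m_closed B.inv_closed inC

lemma stab_subgroup:
  assumes "x \<in> \<Omega>" shows "subgroup {h \<in> G. h x = x} B"
proof (rule B.subgroupI)
  show "{h \<in> G. h x = x} \<subseteq> carrier B" using inC by auto
  show "{h \<in> G. h x = x} \<noteq> {}" using subgroup.one_closed[OF sub] oneapp[OF assms] by auto
next
  fix a assume a: "a \<in> {h \<in> G. h x = x}"
  hence "inv\<^bsub>B\<^esub> a \<in> G" using subgroup.m_inv_closed[OF sub] by simp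
  moreover have "(inv\<^bsub>B\<^esub> a) x = x" using invapp[OF inC assms, of a] a by simp
  ultimately show "inv\<^bsub>B\<^esub> a \<in> {h \<in> G. h x = x}" by simp
next
  fix a b assume a: "a \<in> {h \<in> G. h x = x}" and b: "b \<in> {h \<in> G. h x = x}"
  hence "a \<otimes>\<^bsub>B\<^esub> b \<in> G" using subgroup.m_closed[OF sub] by simp
  moreover have "(a \<otimes>\<^bsub>B\<^esub> b) x = x" using mapp[OF inC inC assms, of a b] a b by simp
  ultimately show "a \<otimes>\<^bsub>B\<^esub> b \<in> {h \<in> G. h x = x}" by simp
qed


lemma Ar_exists:
  assumes A: "subgroup A B" "A \<noteq> {\<one>\<^bsub>B\<^esub>}" "A \<subseteq> G"
    and cA: "\<forall>a\<in>A. \<forall>b\<in>A. a \<otimes>\<^bsub>B\<^esub> b = b \<otimes>\<^bsub>B\<^esub> a"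
    and nA: "\<forall>s\<in>S. \<forall>a\<in>A. s \<otimes>\<^bsub>B\<^esub> a \<otimes>\<^bsub>B\<^esub> inv\<^bsub>B\<^esub> s \<in> A" and S: "S \<subseteq> carrier B"
  shows "\<exists>Ar r. subgroup Ar B \<and> Ar \<subseteq> A \<and> Ar \<noteq> {\<one>\<^bsub>B\<^esub>} \<and> Factorial_Ring.prime r
     \<and> (\<forall>s\<in>S. \<forall>a\<in>Ar. s \<otimes>\<^bsub>B\<^esub> a \<otimes>\<^bsub>B\<^esub> inv\<^bsub>B\<^esub> s \<in> Ar)
     \<and> (\<forall>q. Factorial_Ring.prime q \<and> q dvd card Ar \<longrightarrow> q = r)"
proof -
  have finA: "finite A" using A(3) finG finite_subset by blast
  have "card A \<noteq> 1"
  proof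
    assume "card A = 1" then obtain a where "A = {a}" by (rule card_1_singletonE)
    with subgroup.one_closed[OF A(1)] A(2) show False by simp
  qed
  then obtain r where r: "Factorial_Ring.prime r" "r dvd card A" using prime_factor_nat by blast
  define Ar where "Ar = {a \<in> A. \<exists>m. a [^]\<^bsub>B\<^esub> (r^m) = \<one>\<^bsub>B\<^esub>}"
  have AC: "A \<subseteq> carrier B" using subgroup.subset[OF A(1)] .
  have pw1: "a [^]\<^bsub>B\<^esub> (r^(m+k)) = \<one>\<^bsub>B\<^esub>" if "a \<in> carrier B" "a [^]\<^bsub>B\<^esub> (r^m) = \<one>\<^bsub>B\<^esub>" for a m k
    using that by (simp add: power_add B.nat_pow_pow[symmetric])
  have sAr: "subgroup Ar B"
  proof (rule B.subgroupI)
    show "Ar \<subseteq> carrier B" using AC by (auto simp: Ar_def)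
    have "\<one>\<^bsub>B\<^esub> [^]\<^bsub>B\<^esub> (r^0) = \<one>\<^bsub>B\<^esub>" by simp
    hence "\<one>\<^bsub>B\<^esub> \<in> Ar" using subgroup.one_closed[OF A(1)] unfolding Ar_def by blast
    thus "Ar \<noteq> {}" by blast
  next
    fix a assume "a \<in> Ar"
    then obtain m where a: "a \<in> A" "a [^]\<^bsub>B\<^esub> (r^m) = \<one>\<^bsub>B\<^esub>" by (auto simp: Ar_def)
    have "inv\<^bsub>B\<^esub> a [^]\<^bsub>B\<^esub> (r^m) = \<one>\<^bsub>B\<^esub>" using a AC by (simp add: B.nat_pow_inv subset_iff)
    moreover have "inv\<^bsub>B\<^esub> a \<in> A" using a subgroup.m_inv_closed[OF A(1)] by blast
    ultimately show "inv\<^bsub>B\<^esub> a \<in> Ar" unfolding Ar_def by blast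
  next
    fix a b assume "a \<in> Ar" "b \<in> Ar"
    then obtain m k where a: "a \<in> A" "a [^]\<^bsub>B\<^esub> (r^m) = \<one>\<^bsub>B\<^esub>"
      and b: "b \<in> A" "b [^]\<^bsub>B\<^esub> (r^k) = \<one>\<^bsub>B\<^esub>" by (auto simp: Ar_def)
    have ac: "a \<in> carrier B" "b \<in> carrier B" using a b AC by auto
    have "a [^]\<^bsub>B\<^esub> (r^(m+k)) = \<one>\<^bsub>B\<^esub>" using pw1[OF ac(1) a(2)] .
    moreover have "b [^]\<^bsub>B\<^esub> (r^(m+k)) = \<one>\<^bsub>B\<^esub>" using pw1[OF ac(2) b(2), of m] by (simp add: add.commute)
    moreover have "a \<otimes>\<^bsub>B\<^esub> b = b \<otimes>\<^bsub>B\<^esub> a" using cA a b by blast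
    ultimately have "(a \<otimes>\<^bsub>B\<^esub> b) [^]\<^bsub>B\<^esub> (r^(m+k)) = \<one>\<^bsub>B\<^esub>"
      using B.pow_mult_distrib[OF _ ac] by simp
    moreover have "a \<otimes>\<^bsub>B\<^esub> b \<in> A" using a b subgroup.m_closed[OF A(1)] by blast
    ultimately show "a \<otimes>\<^bsub>B\<^esub> b \<in> Ar" unfolding Ar_def by blast
  qed
  have ArA: "Ar \<subseteq> A" by (auto simp: Ar_def)
  have nAr: "\<forall>s\<in>S. \<forall>a\<in>Ar. s \<otimes>\<^bsub>B\<^esub> a \<otimes>\<^bsub>B\<^esub> inv\<^bsub>B\<^esub> s \<in> Ar"
  proof (intro ballI)
    fix s a assume s: "s \<in> S" and "a \<in> Ar"
    then obtain m where a: "a \<in> A" "a [^]\<^bsub>B\<^esub> (r^m) = \<one>\<^bsub>B\<^esub>" by (auto simp: Ar_def)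
    have sc: "s \<in> carrier B" using S s by blast
    have ac: "a \<in> carrier B" using AC a by blast
    have "(s \<otimes>\<^bsub>B\<^esub> a \<otimes>\<^bsub>B\<^esub> inv\<^bsub>B\<^esub> s) [^]\<^bsub>B\<^esub> (r^m) = \<one>\<^bsub>B\<^esub>"
      using B.conj_pow[OF ac sc] a(2) sc by simp
    moreover have "s \<otimes>\<^bsub>B\<^esub> a \<otimes>\<^bsub>B\<^esub> inv\<^bsub>B\<^esub> s \<in> A" using nA s a by blast
    ultimately show "s \<otimes>\<^bsub>B\<^esub> a \<otimes>\<^bsub>B\<^esub> inv\<^bsub>B\<^esub> s \<in> Ar" unfolding Ar_def by blast
  qed
  have finAr: "finite Ar" using ArA finA finite_subset by blast
  have gA: "group (B\<lparr>carrier := A\<rparr>)" by (rule B.subgroup_imp_group[OF A(1)])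
  obtain e where e: "e \<in> A" "e \<noteq> \<one>\<^bsub>B\<^esub>" "e [^]\<^bsub>B\<^esub> r = \<one>\<^bsub>B\<^esub>"
    using group.cauchy_elem[OF gA _ r(1)] finA r(2) by (auto simp: order_def B.nat_pow_consistent[symmetric])
  have "e [^]\<^bsub>B\<^esub> (r^1) = \<one>\<^bsub>B\<^esub>" using e by simp
  hence "e \<in> Ar" using e unfolding Ar_def by blast
  hence ne: "Ar \<noteq> {\<one>\<^bsub>B\<^esub>}" using e by blast
  have gAr: "group (B\<lparr>carrier := Ar\<rparr>)" by (rule B.subgroup_imp_group[OF sAr])
  have pp: "\<forall>q. Factorial_Ring.prime q \<and> q dvd card Ar \<longrightarrow> q = r"
  proof (intro allI impI)
    fix q assume q: "Factorial_Ring.prime q \<and> q dvd card Ar"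
    obtain f where f: "f \<in> Ar" "f \<noteq> \<one>\<^bsub>B\<^esub>" "f [^]\<^bsub>B\<^esub> q = \<one>\<^bsub>B\<^esub>"
      using group.cauchy_elem[OF gAr _ _, of q] finAr q by (auto simp: order_def B.nat_pow_consistent[symmetric])
    then obtain m where fm: "f [^]\<^bsub>B\<^esub> (r^m) = \<one>\<^bsub>B\<^esub>" by (auto simp: Ar_def)
    have fc: "f \<in> carrier B" using f ArA AC by blast
    have d1: "B.ord f dvd q" using B.pow_eq_id[OF fc] f(3) by simp
    have d2: "B.ord f dvd r^m" using B.pow_eq_id[OF fc] fm by simp
    show "q = r"
    proof (rule ccontr)
      assume "q \<noteq> r"
      hence "coprime q r" using q r(1) by (simp add: primes_coprime)
      hence "coprime q (r^m)" by simp
      hence "B.ord f dvd 1" using d1 d2 coprime_common_divisor_nat by (metis dvd_refl)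
      hence "f [^]\<^bsub>B\<^esub> (1::nat) = \<one>\<^bsub>B\<^esub>" by (subst B.pow_eq_id[OF fc])
      thus False using f fc by simp
    qed
  qed
  show ?thesis using sAr ArA ne r(1) nAr pp by blast
qed


lemma normal_or_trans:
  assumes x: "x \<in> \<Omega>" and tr: "\<forall>y\<in>\<Omega>. \<exists>h\<in>G. h x = y"
    and mx: "\<And>K. subgroup K B \<Longrightarrow> {h \<in> G. h x = x} \<subseteq> K \<Longrightarrow> K \<subseteq> G \<Longrightarrow> K = {h \<in> G. h x = x} \<or> K = G"
    and U: "subgroup U B" "U \<subseteq> G"
    and nU: "\<forall>s\<in>{h \<in> G. h x = x}. \<forall>u\<in>U. s \<otimes>\<^bsub>B\<^esub> u \<otimes>\<^bsub>B\<^esub> inv\<^bsub>B\<^esub> s \<in> U"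
  shows "U \<subseteq> {h \<in> G. h x = x} \<or> (\<forall>y\<in>\<Omega>. \<exists>u\<in>U. u x = y)"
proof -
  let ?S = "{h \<in> G. h x = x}"
  let ?K = "{u \<otimes>\<^bsub>B\<^esub> s | u s. u \<in> U \<and> s \<in> ?S}"
  have K: "subgroup ?K B" by (rule B.prod_subgroup[OF U(1) stab_subgroup[OF x] nU])
  have SK: "?S \<subseteq> ?K"
  proof
    fix s assume s: "s \<in> ?S"
    have "s = \<one>\<^bsub>B\<^esub> \<otimes>\<^bsub>B\<^esub> s" using s inC by simp
    thus "s \<in> ?K" using s subgroup.one_closed[OF U(1)] by blast
  qed
  have KG: "?K \<subseteq> G"
  proof
    fix k assume "k \<in> ?K"
    then obtain u s where "k = u \<otimes>\<^bsub>B\<^esub> s" "u \<in> U" "s \<in> ?S" by blast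
    thus "k \<in> G" using U(2) subgroup.m_closed[OF sub] by auto
  qed
  from mx[OF K SK KG] show ?thesis
  proof
    assume KS: "?K = ?S"
    have "U \<subseteq> ?K"
    proof
      fix u assume u: "u \<in> U"
      hence "u = u \<otimes>\<^bsub>B\<^esub> \<one>\<^bsub>B\<^esub>" using U(2) inC by auto
      moreover have "\<one>\<^bsub>B\<^esub> \<in> ?S" using subgroup.one_closed[OF sub] oneapp[OF x] by simp
      ultimately show "u \<in> ?K" using u by blast
    qed
    thus ?thesis using KS by simp
  next
    assume KG: "?K = G"
    have "\<exists>u\<in>U. u x = y" if y: "y \<in> \<Omega>" for y
    proof -
      obtain h where h: "h \<in> G" "h x = y" using tr y by blast
      hence "h \<in> ?K" using KG by simp
      then obtain u s where us: "h = u \<otimes>\<^bsub>B\<^esub> s" "u \<in> U" "s \<in> ?S" by blast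
      have "h x = u (s x)" using us U(2) inC x mapp by auto
      hence "u x = y" using us h by simp
      thus ?thesis using us by blast
    qed
    thus ?thesis by blast
  qed
qed

lemma normal_sub_stab_trivial:
  assumes x: "x \<in> \<Omega>" and tr: "\<forall>y\<in>\<Omega>. \<exists>h\<in>G. h x = y"
    and N: "N \<subseteq> G" and nN: "\<forall>h\<in>G. \<forall>n\<in>N. h \<otimes>\<^bsub>B\<^esub> n \<otimes>\<^bsub>B\<^esub> inv\<^bsub>B\<^esub> h \<in> N"
    and NS: "N \<subseteq> {h \<in> G. h x = x}"
  shows "N \<subseteq> {\<one>\<^bsub>B\<^esub>}"
proof
  fix n assume n: "n \<in> N"
  have nc: "n \<in> carrier B" using n N inC by blast
  have "n = \<one>\<^bsub>B\<^esub>"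
  proof (rule fixone[OF nc])
    fix y assume y: "y \<in> \<Omega>"
    obtain h where h: "h \<in> G" "h x = y" using tr y by blast
    have hc: "h \<in> carrier B" "inv\<^bsub>B\<^esub> h \<in> carrier B" using h inC by auto
    have "inv\<^bsub>B\<^esub> h \<in> G" using h subgroup.m_inv_closed[OF sub] by blast
    hence "inv\<^bsub>B\<^esub> h \<otimes>\<^bsub>B\<^esub> n \<otimes>\<^bsub>B\<^esub> inv\<^bsub>B\<^esub> (inv\<^bsub>B\<^esub> h) \<in> N" using nN n by blast
    hence c: "inv\<^bsub>B\<^esub> h \<otimes>\<^bsub>B\<^esub> n \<otimes>\<^bsub>B\<^esub> h \<in> N" using hc by simp
    have "(inv\<^bsub>B\<^esub> h \<otimes>\<^bsub>B\<^esub> n \<otimes>\<^bsub>B\<^esub> h) x = x" using NS c by blast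
    moreover have "(inv\<^bsub>B\<^esub> h \<otimes>\<^bsub>B\<^esub> n \<otimes>\<^bsub>B\<^esub> h) x = (inv\<^bsub>B\<^esub> h) (n y)"
      using hc nc x y h(2) by (simp add: mapp appin)
    ultimately have "(inv\<^bsub>B\<^esub> h) (n y) = x" by simp
    hence "h ((inv\<^bsub>B\<^esub> h) (n y)) = y" using h by simp
    thus "n y = y" using appinv[OF hc(1) appin[OF nc y]] by simp
  qed
  thus "n \<in> {\<one>\<^bsub>B\<^esub>}" by simp
qed

lemma regular_eq:
  assumes x: "x \<in> \<Omega>" and N: "N \<subseteq> G" and cN: "\<forall>a\<in>N. \<forall>b\<in>N. a \<otimes>\<^bsub>B\<^esub> b = b \<otimes>\<^bsub>B\<^esub> a"
    and sN: "subgroup N B" and trN: "\<forall>y\<in>\<Omega>. \<exists>n\<in>N. n x = y"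
    and n: "n \<in> N" "n' \<in> N" "n x = n' x"
  shows "n = n'"
proof -
  have c: "n \<in> carrier B" "n' \<in> carrier B" using n N inC by auto
  let ?m = "inv\<^bsub>B\<^esub> n' \<otimes>\<^bsub>B\<^esub> n"
  have mN: "?m \<in> N" using n subgroup.m_closed[OF sN] subgroup.m_inv_closed[OF sN] by blast
  have mc: "?m \<in> carrier B" using c by simp
  have mx: "?m x = x" using c x n(3) by (simp add: mapp invapp)
  have "?m = \<one>\<^bsub>B\<^esub>"
  proof (rule fixone[OF mc])
    fix z assume z: "z \<in> \<Omega>"
    obtain k where k: "k \<in> N" "k x = z" using trN z by blast
    have kc: "k \<in> carrier B" using k N inC by auto
    have "?m z = (?m \<otimes>\<^bsub>B\<^esub> k) x" using k mc kc x by (simp add: mapp)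
    also have "... = (k \<otimes>\<^bsub>B\<^esub> ?m) x" using cN mN k by metis
    also have "... = z" using k mc kc x mx by (simp add: mapp)
    finally show "?m z = z" .
  qed
  hence "n' \<otimes>\<^bsub>B\<^esub> ?m = n'" using c by simp
  moreover have "n' \<otimes>\<^bsub>B\<^esub> ?m = n" using c by (simp add: B.m_assoc[symmetric])
  ultimately show ?thesis by simp
qed


lemma Ar_fix:
  assumes x: "x \<in> \<Omega>" and tr: "\<forall>y\<in>\<Omega>. \<exists>h\<in>G. h x = y"
    and mx: "\<And>K. subgroup K B \<Longrightarrow> {h \<in> G. h x = x} \<subseteq> K \<Longrightarrow> K \<subseteq> G \<Longrightarrow> K = {h \<in> G. h x = x} \<or> K = G"
    and N: "subgroup N B" "N \<subseteq> G" and cN: "\<forall>a\<in>N. \<forall>b\<in>N. a \<otimes>\<^bsub>B\<^esub> b = b \<otimes>\<^bsub>B\<^esub> a"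
    and nN: "\<forall>h\<in>G. \<forall>n\<in>N. h \<otimes>\<^bsub>B\<^esub> n \<otimes>\<^bsub>B\<^esub> inv\<^bsub>B\<^esub> h \<in> N"
    and trN: "\<forall>y\<in>\<Omega>. \<exists>n\<in>N. n x = y"
    and Ar: "subgroup Ar B" "Ar \<subseteq> {h \<in> G. h x = x}" "Ar \<noteq> {\<one>\<^bsub>B\<^esub>}"
    and nAr: "\<forall>s\<in>{h \<in> G. h x = x}. \<forall>a\<in>Ar. s \<otimes>\<^bsub>B\<^esub> a \<otimes>\<^bsub>B\<^esub> inv\<^bsub>B\<^esub> s \<in> Ar"
  shows "\<forall>y\<in>\<Omega>. (\<forall>b\<in>Ar. b y = y) \<longrightarrow> y = x"
proof -
  let ?S = "{h \<in> G. h x = x}"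
  define U where "U = {n \<in> N. \<forall>b\<in>Ar. b \<otimes>\<^bsub>B\<^esub> n = n \<otimes>\<^bsub>B\<^esub> b}"
  have ArC: "Ar \<subseteq> carrier B" using Ar(2) inC by auto
  have NC: "N \<subseteq> carrier B" using N(2) inC by auto
  have sU: "subgroup U B"
  proof (rule B.subgroupI)
    show "U \<subseteq> carrier B" using NC by (auto simp: U_def)
    have "\<one>\<^bsub>B\<^esub> \<in> U" using subgroup.one_closed[OF N(1)] ArC by (auto simp: U_def)
    thus "U \<noteq> {}" by blast
  next
    fix n assume "n \<in> U"
    hence n: "n \<in> N" "\<forall>b\<in>Ar. b \<otimes>\<^bsub>B\<^esub> n = n \<otimes>\<^bsub>B\<^esub> b" by (auto simp: U_def)
    have "\<forall>b\<in>Ar. b \<otimes>\<^bsub>B\<^esub> inv\<^bsub>B\<^esub> n = inv\<^bsub>B\<^esub> n \<otimes>\<^bsub>B\<^esub> b"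
      using n ArC NC B.comm_inv by blast
    thus "inv\<^bsub>B\<^esub> n \<in> U" using n subgroup.m_inv_closed[OF N(1)] by (auto simp: U_def)
  next
    fix n n' assume "n \<in> U" "n' \<in> U"
    hence n: "n \<in> N" "\<forall>b\<in>Ar. b \<otimes>\<^bsub>B\<^esub> n = n \<otimes>\<^bsub>B\<^esub> b"
      and n': "n' \<in> N" "\<forall>b\<in>Ar. b \<otimes>\<^bsub>B\<^esub> n' = n' \<otimes>\<^bsub>B\<^esub> b" by (auto simp: U_def)
    have "b \<otimes>\<^bsub>B\<^esub> (n \<otimes>\<^bsub>B\<^esub> n') = (n \<otimes>\<^bsub>B\<^esub> n') \<otimes>\<^bsub>B\<^esub> b" if b: "b \<in> Ar" for b
    proof -
      have c: "b \<in> carrier B" "n \<in> carrier B" "n' \<in> carrier B" using b n n' ArC NC by auto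
      have "b \<otimes>\<^bsub>B\<^esub> (n \<otimes>\<^bsub>B\<^esub> n') = (b \<otimes>\<^bsub>B\<^esub> n) \<otimes>\<^bsub>B\<^esub> n'" using c by (simp add: B.m_assoc)
      also have "... = n \<otimes>\<^bsub>B\<^esub> (b \<otimes>\<^bsub>B\<^esub> n')" using n b c by (simp add: B.m_assoc)
      also have "... = (n \<otimes>\<^bsub>B\<^esub> n') \<otimes>\<^bsub>B\<^esub> b" using n' b c by (simp add: B.m_assoc)
      finally show ?thesis .
    qed
    thus "n \<otimes>\<^bsub>B\<^esub> n' \<in> U" using n n' subgroup.m_closed[OF N(1)] by (auto simp: U_def)
  qed
  have UG: "U \<subseteq> G" using N(2) by (auto simp: U_def)
  have nU: "\<forall>s\<in>?S. \<forall>u\<in>U. s \<otimes>\<^bsub>B\<^esub> u \<otimes>\<^bsub>B\<^esub> inv\<^bsub>B\<^esub> s \<in> U"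
  proof (intro ballI)
    fix s u assume s: "s \<in> ?S" and u: "u \<in> U"
    have sc: "s \<in> carrier B" using s inC by auto
    have uN: "u \<in> N" and uc: "u \<in> carrier B" using u NC by (auto simp: U_def)
    define c where "c = s \<otimes>\<^bsub>B\<^esub> u \<otimes>\<^bsub>B\<^esub> inv\<^bsub>B\<^esub> s"
    have cN: "c \<in> N" using nN s uN unfolding c_def by blast
    have "b \<otimes>\<^bsub>B\<^esub> c = c \<otimes>\<^bsub>B\<^esub> b" if b: "b \<in> Ar" for b
    proof -
      have bc: "b \<in> carrier B" using b ArC by auto
      have iS: "inv\<^bsub>B\<^esub> s \<in> ?S" using s subgroup.m_inv_closed[OF stab_subgroup[OF x]] by blast
      define b' where "b' = inv\<^bsub>B\<^esub> s \<otimes>\<^bsub>B\<^esub> b \<otimes>\<^bsub>B\<^esub> s"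
      have "inv\<^bsub>B\<^esub> s \<otimes>\<^bsub>B\<^esub> b \<otimes>\<^bsub>B\<^esub> inv\<^bsub>B\<^esub> (inv\<^bsub>B\<^esub> s) \<in> Ar" using nAr iS b by blast
      hence b'A: "b' \<in> Ar" unfolding b'_def using sc by simp
      hence b'c: "b' \<in> carrier B" using ArC by auto
      have cm: "b' \<otimes>\<^bsub>B\<^esub> u = u \<otimes>\<^bsub>B\<^esub> b'" using u b'A by (auto simp: U_def)
      have bb: "b = s \<otimes>\<^bsub>B\<^esub> b' \<otimes>\<^bsub>B\<^esub> inv\<^bsub>B\<^esub> s" unfolding b'_def using sc bc
        by (simp add: B.m_assoc B.cancel_inv_l)
      have e1: "b \<otimes>\<^bsub>B\<^esub> c = s \<otimes>\<^bsub>B\<^esub> ((b' \<otimes>\<^bsub>B\<^esub> u) \<otimes>\<^bsub>B\<^esub> inv\<^bsub>B\<^esub> s)"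
        unfolding c_def by (subst bb) (simp add: B.m_assoc B.inv_cancel_l sc b'c uc)
      have e2: "c \<otimes>\<^bsub>B\<^esub> b = s \<otimes>\<^bsub>B\<^esub> ((u \<otimes>\<^bsub>B\<^esub> b') \<otimes>\<^bsub>B\<^esub> inv\<^bsub>B\<^esub> s)"
        unfolding c_def by (subst bb) (simp add: B.m_assoc B.inv_cancel_l sc b'c uc)
      show ?thesis using e1 e2 cm by simp
    qed
    thus "s \<otimes>\<^bsub>B\<^esub> u \<otimes>\<^bsub>B\<^esub> inv\<^bsub>B\<^esub> s \<in> U" using cN unfolding U_def c_def by blast
  qed
  from normal_or_trans[OF x tr mx sU UG nU] show ?thesis
  proof
    assume US: "U \<subseteq> ?S"
    show ?thesis
    proof (intro ballI impI)
      fix y assume y: "y \<in> \<Omega>" and fy: "\<forall>b\<in>Ar. b y = y"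
      obtain n where n: "n \<in> N" "n x = y" using trN y by blast
      have nc: "n \<in> carrier B" using n NC by auto
      have "\<forall>b\<in>Ar. b \<otimes>\<^bsub>B\<^esub> n = n \<otimes>\<^bsub>B\<^esub> b"
      proof
        fix b assume b: "b \<in> Ar"
        have bc: "b \<in> carrier B" and bG: "b \<in> G" and bx: "b x = x" using b ArC Ar(2) by auto
        have ibx: "(inv\<^bsub>B\<^esub> b) x = x" using invapp[OF bc x] bx by simp
        have cN2: "b \<otimes>\<^bsub>B\<^esub> n \<otimes>\<^bsub>B\<^esub> inv\<^bsub>B\<^esub> b \<in> N" using nN bG n by blast
        have "(b \<otimes>\<^bsub>B\<^esub> n \<otimes>\<^bsub>B\<^esub> inv\<^bsub>B\<^esub> b) x = b (n x)"
          using bc nc x ibx by (simp add: mapp)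
        also have "... = n x" using fy b n by simp
        finally have "b \<otimes>\<^bsub>B\<^esub> n \<otimes>\<^bsub>B\<^esub> inv\<^bsub>B\<^esub> b = n"
          using regular_eq[OF x N(2) cN N(1) trN cN2 n(1)] by blast
        hence "(b \<otimes>\<^bsub>B\<^esub> n \<otimes>\<^bsub>B\<^esub> inv\<^bsub>B\<^esub> b) \<otimes>\<^bsub>B\<^esub> b = n \<otimes>\<^bsub>B\<^esub> b" by simp
        thus "b \<otimes>\<^bsub>B\<^esub> n = n \<otimes>\<^bsub>B\<^esub> b" using bc nc by (simp add: B.m_assoc)
      qed
      hence "n \<in> U" using n by (simp add: U_def)
      hence "n x = x" using US by blast
      thus "y = x" using n by simp
    qed
  next
    assume trU: "\<forall>y\<in>\<Omega>. \<exists>u\<in>U. u x = y"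
    have "Ar \<subseteq> {\<one>\<^bsub>B\<^esub>}"
    proof
      fix b assume b: "b \<in> Ar"
      have bc: "b \<in> carrier B" and bx: "b x = x" using b ArC Ar(2) by auto
      have "b = \<one>\<^bsub>B\<^esub>"
      proof (rule fixone[OF bc])
        fix y assume y: "y \<in> \<Omega>"
        obtain u where u: "u \<in> U" "u x = y" using trU y by blast
        have uc: "u \<in> carrier B" and cm: "b \<otimes>\<^bsub>B\<^esub> u = u \<otimes>\<^bsub>B\<^esub> b" using u b NC by (auto simp: U_def)
        have "b y = (b \<otimes>\<^bsub>B\<^esub> u) x" using u bc uc x by (simp add: mapp)
        also have "... = (u \<otimes>\<^bsub>B\<^esub> b) x" using cm by simp
        also have "... = y" using u bc uc x bx by (simp add: mapp)
        finally show "b y = y" .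
      qed
      thus "b \<in> {\<one>\<^bsub>B\<^esub>}" by simp
    qed
    hence False using Ar(3) subgroup.one_closed[OF Ar(1)] by blast
    thus ?thesis by blast
  qed
qed


lemma Ar_trans:
  assumes x: "x \<in> \<Omega>" and Ar: "subgroup Ar B" "Ar \<subseteq> {h \<in> G. h x = x}"
    and pp: "\<forall>q. Factorial_Ring.prime q \<and> q dvd card Ar \<longrightarrow> q = r" and r: "Factorial_Ring.prime r"
    and fx: "\<forall>y\<in>\<Omega>. (\<forall>b\<in>Ar. b y = y) \<longrightarrow> y = x"
    and p: "Factorial_Ring.prime (card \<Omega> - 1)"
  shows "\<forall>y\<in>\<Omega>-{x}. \<forall>z\<in>\<Omega>-{x}. \<exists>b\<in>Ar. b y = z"
proof -
  let ?A = "B\<lparr>carrier := Ar\<rparr>"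
  have ArC: "Ar \<subseteq> carrier B" using Ar(2) inC by auto
  have "Ar \<subseteq> G" using Ar(2) by auto
  hence finAr: "finite Ar" using finG by (rule finite_subset)
  have gA: "group ?A" by (rule B.subgroup_imp_group[OF Ar(1)])
  have act: "group_action ?A \<Omega> (\<lambda>g. g)"
    unfolding group_action_def group_hom_def group_hom_axioms_def hom_def
    using gA B.is_group ArC by auto
  define Orb where "Orb y = {b y | b. b \<in> Ar}" for y
  have orbO: "orbit ?A (\<lambda>g. g) y = Orb y" for y by (simp add: orbit_def Orb_def)
  have dv: "card (Orb y) dvd card Ar" if y: "y \<in> \<Omega>" for y
  proof -
    have "card (Orb y) * card (stabilizer ?A (\<lambda>g. g) y) = card Ar"
      using group_action.orbit_stabilizer_theorem[OF act y] orbO by (simp add: order_def)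
    thus ?thesis by (metis dvd_triv_left)
  qed
  have Oin: "Orb y \<subseteq> \<Omega>" if "y \<in> \<Omega>" for y using that ArC appin by (auto simp: Orb_def)
  have one: "\<one>\<^bsub>B\<^esub> \<in> Ar" by (rule subgroup.one_closed[OF Ar(1)])
  have yO: "y \<in> Orb y" if "y \<in> \<Omega>" for y
  proof -
    have "y = \<one>\<^bsub>B\<^esub> y \<and> \<one>\<^bsub>B\<^esub> \<in> Ar" using oneapp[OF that] one by simp
    thus ?thesis unfolding Orb_def by blast
  qed
  have finO: "finite (Orb y)" if "y \<in> \<Omega>" for y using Oin[OF that] fin finite_subset by blast
  have rdv: "r dvd card (Orb y)" if y: "y \<in> \<Omega>" "y \<noteq> x" for y
  proof -
    have "card (Orb y) \<noteq> 1"
    proof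
      assume "card (Orb y) = 1"
      then obtain a where "Orb y = {a}" by (rule card_1_singletonE)
      hence Oy: "Orb y = {y}" using yO[OF y(1)] by simp
      have "\<forall>b\<in>Ar. b y = y"
      proof
        fix b assume "b \<in> Ar"
        hence "b y \<in> Orb y" unfolding Orb_def by blast
        thus "b y = y" using Oy by simp
      qed
      thus False using fx y by blast
    qed
    then obtain q where q: "Factorial_Ring.prime q" "q dvd card (Orb y)" using prime_factor_nat by blast
    hence "q dvd card Ar" using dv[OF y(1)] dvd_trans by blast
    hence "q = r" using pp q by blast
    thus ?thesis using q by simp
  qed
  have Ox: "Orb x = {x}"
  proof
    show "Orb x \<subseteq> {x}" using Ar(2) by (auto simp: Orb_def)
    show "{x} \<subseteq> Orb x" using yO[OF x] by simp
  qed
  have orbs: "orbits ?A \<Omega> (\<lambda>g. g) = Orb ` \<Omega>" by (auto simp: orbits_def orbO)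
  have "(\<Sum>orb\<in>orbits ?A \<Omega> (\<lambda>g. g). \<Sum>z\<in>orb. (1::nat)) = (\<Sum>z\<in>\<Omega>. 1)"
    by (rule group_action.disjoint_sum[OF act fin])
  hence sum_eq: "(\<Sum>orb\<in>Orb ` \<Omega>. card orb) = card \<Omega>" using orbs by simp
  have finOs: "finite (Orb ` \<Omega>)" using fin by simp
  have xin: "{x} \<in> Orb ` \<Omega>" using Ox x by force
  have "(\<Sum>orb\<in>Orb ` \<Omega>. card orb) = card {x} + (\<Sum>orb\<in>Orb ` \<Omega> - {{x}}. card orb)"
    using sum.remove[OF finOs xin, of card] by simp
  hence ce: "card \<Omega> = 1 + (\<Sum>orb\<in>Orb ` \<Omega> - {{x}}. card orb)" using sum_eq by simp
  have "r dvd (\<Sum>orb\<in>Orb ` \<Omega> - {{x}}. card orb)"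
  proof (rule dvd_sum)
    fix orb assume "orb \<in> Orb ` \<Omega> - {{x}}"
    then obtain y where y: "y \<in> \<Omega>" "orb = Orb y" "Orb y \<noteq> {x}" by blast
    hence "y \<noteq> x" using Ox by auto
    thus "r dvd card orb" using rdv y by simp
  qed
  hence "r dvd card \<Omega> - 1" using ce by simp
  hence rp: "r = card \<Omega> - 1" using p r by (metis prime_nat_iff not_prime_1)
  have cO: "card (\<Omega> - {x}) = r" using rp x fin by simp
  show ?thesis
  proof (intro ballI)
    fix y z assume y: "y \<in> \<Omega> - {x}" and z: "z \<in> \<Omega> - {x}"
    have sub1: "Orb y \<subseteq> \<Omega> - {x}"
    proof
      fix w assume wO: "w \<in> Orb y"
      then obtain b where b: "b \<in> Ar" "w = b y" unfolding Orb_def by blast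
      have bc: "b \<in> carrier B" and bx: "b x = x" using b Ar(2) ArC by auto
      have "w \<noteq> x"
      proof
        assume "w = x"
        hence "b y = b x" using b bx by simp
        hence "y = x" using injapp[OF bc] y x by blast
        thus False using y by simp
      qed
      thus "w \<in> \<Omega> - {x}" using Oin[of y] y wO by blast
    qed
    have yy: "y \<in> \<Omega>" "y \<noteq> x" using y by auto
    have "Orb y \<noteq> {}" using yO[OF yy(1)] by blast
    hence "card (Orb y) > 0" using finO[OF yy(1)] by (simp add: card_gt_0_iff)
    hence ge: "card (Orb y) \<ge> r" using rdv[OF yy] by (simp add: dvd_imp_le)
    have fB: "finite (\<Omega> - {x})" using fin by simp
    have "card (Orb y) \<le> card (\<Omega> - {x})" by (rule card_mono[OF fB sub1])
    hence "card (Orb y) = card (\<Omega> - {x})" using ge cO by linarith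
    hence "Orb y = \<Omega> - {x}" by (rule card_subset_eq[OF fB sub1])
    hence "z \<in> Orb y" using z by simp
    thus "\<exists>b\<in>Ar. b y = z" unfolding Orb_def by blast
  qed
qed


lemma final_fix:
  assumes x: "x \<in> \<Omega>" and Ar: "subgroup Ar B" "Ar \<subseteq> {h \<in> G. h x = x}"
    and cAr: "\<forall>a\<in>Ar. \<forall>b\<in>Ar. a \<otimes>\<^bsub>B\<^esub> b = b \<otimes>\<^bsub>B\<^esub> a"
    and nAr: "\<forall>s\<in>{h \<in> G. h x = x}. \<forall>a\<in>Ar. s \<otimes>\<^bsub>B\<^esub> a \<otimes>\<^bsub>B\<^esub> inv\<^bsub>B\<^esub> s \<in> Ar"
    and trA: "\<forall>y\<in>\<Omega>-{x}. \<forall>z\<in>\<Omega>-{x}. \<exists>b\<in>Ar. b y = z"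
    and p: "Factorial_Ring.prime (card \<Omega> - 1)"
    and g: "g \<in> G" "g x = x"
    and y: "y1 \<in> \<Omega>" "y2 \<in> \<Omega>" "y1 \<noteq> x" "y2 \<noteq> x" "y1 \<noteq> y2" "g y1 = y1" "g y2 = y2"
  shows "g = \<one>\<^bsub>B\<^esub>"
proof -
  have ArC: "Ar \<subseteq> carrier B" using Ar(2) inC by auto
  have gc: "g \<in> carrier B" using g inC by auto
  have y1': "y1 \<in> \<Omega> - {x}" using y by simp
  have reg: "b = b'" if b: "b \<in> Ar" "b' \<in> Ar" "b y1 = b' y1" for b b'
  proof -
    have c: "b \<in> carrier B" "b' \<in> carrier B" using b ArC by auto
    let ?m = "inv\<^bsub>B\<^esub> b' \<otimes>\<^bsub>B\<^esub> b"
    have mA: "?m \<in> Ar" using b subgroup.m_closed[OF Ar(1)] subgroup.m_inv_closed[OF Ar(1)] by blast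
    have mc: "?m \<in> carrier B" using c by simp
    have my: "?m y1 = y1" using c y(1) b(3) by (simp add: mapp invapp)
    have "?m = \<one>\<^bsub>B\<^esub>"
    proof (rule fixone[OF mc])
      fix z assume z: "z \<in> \<Omega>"
      show "?m z = z"
      proof (cases "z = x")
        case True thus ?thesis using mA Ar(2) by auto
      next
        case False
        then obtain e where e: "e \<in> Ar" "e y1 = z" using trA y1' z by blast
        have ec: "e \<in> carrier B" using e ArC by auto
        have "?m z = (?m \<otimes>\<^bsub>B\<^esub> e) y1" using e mc ec y(1) by (simp add: mapp)
        also have "... = (e \<otimes>\<^bsub>B\<^esub> ?m) y1" using cAr mA e by metis
        also have "... = z" using e mc ec y(1) my by (simp add: mapp)
        finally show ?thesis .
      qed
    qed
    hence "b' \<otimes>\<^bsub>B\<^esub> ?m = b'" using c by simp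
    moreover have "b' \<otimes>\<^bsub>B\<^esub> ?m = b" using c by (simp add: B.m_assoc[symmetric])
    ultimately show ?thesis by simp
  qed
  have "bij_betw (\<lambda>b. b y1) Ar (\<Omega> - {x})"
  proof (rule bij_betw_imageI)
    show "inj_on (\<lambda>b. b y1) Ar" using reg by (auto simp: inj_on_def)
    show "(\<lambda>b. b y1) ` Ar = \<Omega> - {x}"
    proof
      show "(\<lambda>b. b y1) ` Ar \<subseteq> \<Omega> - {x}"
      proof
        fix w assume "w \<in> (\<lambda>b. b y1) ` Ar"
        then obtain b where b: "b \<in> Ar" "w = b y1" by blast
        have bc: "b \<in> carrier B" and bx: "b x = x" using b ArC Ar(2) by auto
        have "b y1 \<noteq> b x" using injapp[OF bc y(1) x] y(3) by blast
        thus "w \<in> \<Omega> - {x}" using b bx appin[OF bc y(1)] by simp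
      qed
      show "\<Omega> - {x} \<subseteq> (\<lambda>b. b y1) ` Ar"
      proof
        fix z assume "z \<in> \<Omega> - {x}"
        then obtain b where "b \<in> Ar" "b y1 = z" using trA y1' by blast
        thus "z \<in> (\<lambda>b. b y1) ` Ar" by blast
      qed
    qed
  qed
  hence cAr_eq: "card Ar = card \<Omega> - 1" using bij_betw_same_card x fin by fastforce
  have "Ar \<subseteq> G" using Ar(2) by auto
  hence finAr: "finite Ar" using finG by (rule finite_subset)
  define V where "V = {b \<in> Ar. g \<otimes>\<^bsub>B\<^esub> b = b \<otimes>\<^bsub>B\<^esub> g}"
  have VA: "V \<subseteq> Ar" by (auto simp: V_def)
  have sV: "subgroup V B"
  proof (rule B.subgroupI)
    show "V \<subseteq> carrier B" using VA ArC by auto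
    have "\<one>\<^bsub>B\<^esub> \<in> V" using subgroup.one_closed[OF Ar(1)] gc by (simp add: V_def)
    thus "V \<noteq> {}" by blast
  next
    fix b assume "b \<in> V"
    hence b: "b \<in> Ar" "g \<otimes>\<^bsub>B\<^esub> b = b \<otimes>\<^bsub>B\<^esub> g" by (auto simp: V_def)
    have bc: "b \<in> carrier B" using b ArC by auto
    have "g \<otimes>\<^bsub>B\<^esub> inv\<^bsub>B\<^esub> b = inv\<^bsub>B\<^esub> b \<otimes>\<^bsub>B\<^esub> g" using B.comm_inv[OF gc bc b(2)] .
    thus "inv\<^bsub>B\<^esub> b \<in> V" using b subgroup.m_inv_closed[OF Ar(1)] by (simp add: V_def)
  next
    fix a b assume "a \<in> V" "b \<in> V"
    hence a: "a \<in> Ar" "g \<otimes>\<^bsub>B\<^esub> a = a \<otimes>\<^bsub>B\<^esub> g" and b: "b \<in> Ar" "g \<otimes>\<^bsub>B\<^esub> b = b \<otimes>\<^bsub>B\<^esub> g"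
      by (auto simp: V_def)
    have c: "a \<in> carrier B" "b \<in> carrier B" using a b ArC by auto
    have "g \<otimes>\<^bsub>B\<^esub> (a \<otimes>\<^bsub>B\<^esub> b) = (g \<otimes>\<^bsub>B\<^esub> a) \<otimes>\<^bsub>B\<^esub> b" using c gc by (simp add: B.m_assoc)
    also have "... = a \<otimes>\<^bsub>B\<^esub> (g \<otimes>\<^bsub>B\<^esub> b)" using a c gc by (simp add: B.m_assoc)
    also have "... = (a \<otimes>\<^bsub>B\<^esub> b) \<otimes>\<^bsub>B\<^esub> g" using b c gc by (simp add: B.m_assoc)
    finally show "a \<otimes>\<^bsub>B\<^esub> b \<in> V" using a b subgroup.m_closed[OF Ar(1)] by (simp add: V_def)
  qed
  have gAr: "group (B\<lparr>carrier := Ar\<rparr>)" by (rule B.subgroup_imp_group[OF Ar(1)])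
  have sV': "subgroup V (B\<lparr>carrier := Ar\<rparr>)" by (rule B.subgroup_incl[OF sV Ar(1) VA])
  have "card (rcosets\<^bsub>B\<lparr>carrier := Ar\<rparr>\<^esub> V) * card V = order (B\<lparr>carrier := Ar\<rparr>)"
    by (rule group.lagrange[OF gAr sV'])
  hence dvV: "card V dvd card \<Omega> - 1" using cAr_eq by (simp add: order_def) (metis dvd_triv_right)
  obtain b0 where b0: "b0 \<in> Ar" "b0 y1 = y2" using trA y by blast
  have b0c: "b0 \<in> carrier B" using b0 ArC by auto
  have "b0 \<noteq> \<one>\<^bsub>B\<^esub>" using b0 y oneapp by auto
  have gS: "g \<in> {h \<in> G. h x = x}" using g by simp
  have cA: "g \<otimes>\<^bsub>B\<^esub> b0 \<otimes>\<^bsub>B\<^esub> inv\<^bsub>B\<^esub> g \<in> Ar" using nAr gS b0 by blast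
  have igy: "(inv\<^bsub>B\<^esub> g) y1 = y1" using invapp[OF gc y(1)] y by simp
  have "(g \<otimes>\<^bsub>B\<^esub> b0 \<otimes>\<^bsub>B\<^esub> inv\<^bsub>B\<^esub> g) y1 = g (b0 y1)" using gc b0c y(1) igy by (simp add: mapp)
  also have "... = b0 y1" using b0 y by simp
  finally have "g \<otimes>\<^bsub>B\<^esub> b0 \<otimes>\<^bsub>B\<^esub> inv\<^bsub>B\<^esub> g = b0" using reg[OF cA b0(1)] by blast
  hence "(g \<otimes>\<^bsub>B\<^esub> b0 \<otimes>\<^bsub>B\<^esub> inv\<^bsub>B\<^esub> g) \<otimes>\<^bsub>B\<^esub> g = b0 \<otimes>\<^bsub>B\<^esub> g" by simp
  hence "g \<otimes>\<^bsub>B\<^esub> b0 = b0 \<otimes>\<^bsub>B\<^esub> g" using gc b0c by (simp add: B.m_assoc)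
  hence b0V: "b0 \<in> V" using b0 by (simp add: V_def)
  have oneV: "\<one>\<^bsub>B\<^esub> \<in> V" by (rule subgroup.one_closed[OF sV])
  have finV: "finite V" using VA finAr finite_subset by blast
  have "{\<one>\<^bsub>B\<^esub>, b0} \<subseteq> V" using b0V oneV by simp
  hence "card {\<one>\<^bsub>B\<^esub>, b0} \<le> card V" using finV card_mono by blast
  hence "card V \<noteq> 1" using \<open>b0 \<noteq> \<one>\<^bsub>B\<^esub>\<close> by simp
  hence "card V = card \<Omega> - 1" using dvV p by (metis prime_nat_iff)
  hence "V = Ar" using card_subset_eq[OF finAr VA] cAr_eq by simp
  show "g = \<one>\<^bsub>B\<^esub>"
  proof (rule fixone[OF gc])
    fix z assume z: "z \<in> \<Omega>"
    show "g z = z"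
    proof (cases "z = x")
      case True thus ?thesis using g by simp
    next
      case False
      then obtain b where b: "b \<in> Ar" "b y1 = z" using trA y1' z by blast
      have bc: "b \<in> carrier B" using b ArC by auto
      have cm: "g \<otimes>\<^bsub>B\<^esub> b = b \<otimes>\<^bsub>B\<^esub> g" using b \<open>V = Ar\<close> by (auto simp: V_def)
      have "g z = (g \<otimes>\<^bsub>B\<^esub> b) y1" using b gc bc y(1) by (simp add: mapp)
      also have "... = (b \<otimes>\<^bsub>B\<^esub> g) y1" using cm by simp
      also have "... = z" using b gc bc y by (simp add: mapp)
      finally show ?thesis .
    qed
  qed
qed

end

lemma derived_H_B:
  assumes sub: "subgroup G (BijGroup \<Omega>)" and K: "K \<subseteq> G"
  shows "(derived (perm_subgroup \<Omega> G) ^^ n) K = (derived (BijGroup \<Omega>) ^^ n) K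
         \<and> (derived (BijGroup \<Omega>) ^^ n) K \<subseteq> G"
proof (induction n)
  case 0 thus ?case using K by simp
next
  case (Suc n)
  have gB: "group (BijGroup \<Omega>)" by (rule group_BijGroup)
  let ?D = "(derived (BijGroup \<Omega>) ^^ n) K"
  have "derived (perm_subgroup \<Omega> G) ?D = derived (BijGroup \<Omega>) ?D"
    using group.derived_consistent[OF gB _ sub] Suc by blast
  moreover have "derived (BijGroup \<Omega>) ?D \<subseteq> G"
    using group.derived_incl[OF gB _ sub] Suc by blast
  ultimately show ?case using Suc by simp
qed

theorem proposition2p3:
  fixes \<Omega> :: "'a set" and G :: "('a \<Rightarrow> 'a) set" and k d :: nat
  assumes "k \<ge> 1" and "d = 2 ^ k" and "Factorial_Ring.prime (d - 1)"
    and "finite \<Omega>" and "card \<Omega> = d"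
    and "subgroup G (BijGroup \<Omega>)"
    and "primitive_perm_group \<Omega> G"
    and "solvable (perm_subgroup \<Omega> G)"
  shows "\<forall>g\<in>G. g \<noteq> \<one>\<^bsub>BijGroup \<Omega>\<^esub> \<longrightarrow> card {x\<in>\<Omega>. g x = x} \<le> 2"
proof (intro ballI impI)
  fix g assume gG: "g \<in> G" and g1: "g \<noteq> \<one>\<^bsub>BijGroup \<Omega>\<^esub>"
  interpret P: pgrp \<Omega> G by (rule pgrp.intro[OF assms(6) assms(4)])
  have p: "Factorial_Ring.prime (card \<Omega> - 1)" using assms(3,5) by simp
  show "card {x\<in>\<Omega>. g x = x} \<le> 2"
  proof (rule ccontr)
    define F where "F = {x\<in>\<Omega>. g x = x}"
    assume "\<not> card {x\<in>\<Omega>. g x = x} \<le> 2"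
    hence c3: "card F \<ge> 3" unfolding F_def by simp
    have finF: "finite F" using assms(4) by (simp add: F_def)
    have "F \<noteq> {}" using c3 by auto
    then obtain x where xF: "x \<in> F" by blast
    have c2: "card (F - {x}) \<ge> 2" using c3 xF finF by simp
    have "F - {x} \<noteq> {}"
    proof
      assume e: "F - {x} = {}"
      have "card (F - {x}) = 0" by (simp only: e card.empty)
      thus False using c2 by linarith
    qed
    then obtain y1 where y1F: "y1 \<in> F - {x}" by blast
    have c1: "card (F - {x} - {y1}) \<ge> 1" using c2 y1F finF by simp
    have "F - {x} - {y1} \<noteq> {}"
    proof
      assume e: "F - {x} - {y1} = {}"
      have "card (F - {x} - {y1}) = 0" by (simp only: e card.empty)
      thus False using c1 by linarith
    qed
    then obtain y2 where y2F: "y2 \<in> F - {x} - {y1}" by blast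
    have x: "x \<in> \<Omega>" "g x = x" using xF by (auto simp: F_def)
    have y: "y1 \<in> \<Omega>" "y2 \<in> \<Omega>" "y1 \<noteq> x" "y2 \<noteq> x" "y1 \<noteq> y2" "g y1 = y1" "g y2 = y2"
      using y1F y2F by (auto simp: F_def)
    let ?S = "{h \<in> G. h x = x}"
    have prim: "transitive_perm_group \<Omega> G"
      "\<forall>x\<in>\<Omega>. maximal_subgroup (stabilizer (perm_subgroup \<Omega> G) (\<lambda>g. g) x) (perm_subgroup \<Omega> G)"
      using assms(7) unfolding primitive_perm_group_def by auto
    have tr: "\<forall>y\<in>\<Omega>. \<exists>h\<in>G. h x = y" using prim(1) x unfolding transitive_perm_group_def by blast
    have stab: "stabilizer (perm_subgroup \<Omega> G) (\<lambda>g. g) x = ?S" by (simp add: stabilizer_def)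
    have ms: "maximal_subgroup ?S (perm_subgroup \<Omega> G)" using prim(2) x stab by metis
    have mx: "K = ?S \<or> K = G" if K: "subgroup K P.B" "?S \<subseteq> K" "K \<subseteq> G" for K
    proof -
      have "subgroup K (perm_subgroup \<Omega> G)" by (rule P.B.subgroup_incl[OF K(1) assms(6) K(3)])
      thus ?thesis using ms K(2) unfolding maximal_subgroup_def by simp
    qed
    have gH: "group (perm_subgroup \<Omega> G)" by (rule P.B.subgroup_imp_group[OF assms(6)])
    obtain n where "(derived (perm_subgroup \<Omega> G) ^^ n) (carrier (perm_subgroup \<Omega> G)) = {\<one>\<^bsub>perm_subgroup \<Omega> G\<^esub>}"
      using group.solvable_iff_trivial_derived_seq[OF gH] assms(8) by blast
    hence solv: "(derived P.B ^^ n) G = {\<one>\<^bsub>P.B\<^esub>}" using derived_H_B[OF assms(6), of G n] by simp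
    have gc: "g \<in> carrier P.B" using gG P.inC by auto
    have Gne: "G \<noteq> {\<one>\<^bsub>P.B\<^esub>}" using gG g1 by auto
    obtain N where N: "subgroup N P.B" "N \<subseteq> G" "N \<noteq> {\<one>\<^bsub>P.B\<^esub>}"
      and cN: "\<forall>a\<in>N. \<forall>b\<in>N. a \<otimes>\<^bsub>P.B\<^esub> b = b \<otimes>\<^bsub>P.B\<^esub> a"
      and nN: "\<forall>s\<in>G. \<forall>a\<in>N. s \<otimes>\<^bsub>P.B\<^esub> a \<otimes>\<^bsub>P.B\<^esub> inv\<^bsub>P.B\<^esub> s \<in> N"
      using P.B.abelian_normal_sub[OF assms(6) Gne solv] by blast
    have nNS: "\<forall>s\<in>?S. \<forall>a\<in>N. s \<otimes>\<^bsub>P.B\<^esub> a \<otimes>\<^bsub>P.B\<^esub> inv\<^bsub>P.B\<^esub> s \<in> N" using nN by blast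
    have trN: "\<forall>y\<in>\<Omega>. \<exists>u\<in>N. u x = y"
    proof -
      have "N \<subseteq> ?S \<or> (\<forall>y\<in>\<Omega>. \<exists>u\<in>N. u x = y)"
        by (rule P.normal_or_trans[OF x(1) tr mx N(1) N(2) nNS])
      moreover have "\<not> N \<subseteq> ?S"
      proof
        assume "N \<subseteq> ?S"
        hence "N \<subseteq> {\<one>\<^bsub>P.B\<^esub>}" by (rule P.normal_sub_stab_trivial[OF x(1) tr N(2) nN])
        thus False using N(3) subgroup.one_closed[OF N(1)] by blast
      qed
      ultimately show ?thesis by blast
    qed
    have sS: "subgroup ?S P.B" by (rule P.stab_subgroup[OF x(1)])
    have Sne: "?S \<noteq> {\<one>\<^bsub>P.B\<^esub>}" using gG x g1 by auto
    have "(derived P.B ^^ n) ?S \<subseteq> (derived P.B ^^ n) G" by (rule P.B.mono_exp_of_derived) auto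
    moreover have "\<one>\<^bsub>P.B\<^esub> \<in> (derived P.B ^^ n) ?S"
      by (rule subgroup.one_closed[OF P.B.exp_of_derived_is_subgroup[OF sS]])
    ultimately have solvS: "(derived P.B ^^ n) ?S = {\<one>\<^bsub>P.B\<^esub>}" using solv by blast
    obtain A where A: "subgroup A P.B" "A \<subseteq> ?S" "A \<noteq> {\<one>\<^bsub>P.B\<^esub>}"
      and cA: "\<forall>a\<in>A. \<forall>b\<in>A. a \<otimes>\<^bsub>P.B\<^esub> b = b \<otimes>\<^bsub>P.B\<^esub> a"
      and nA: "\<forall>s\<in>?S. \<forall>a\<in>A. s \<otimes>\<^bsub>P.B\<^esub> a \<otimes>\<^bsub>P.B\<^esub> inv\<^bsub>P.B\<^esub> s \<in> A"
      using P.B.abelian_normal_sub[OF sS Sne solvS] by blast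
    have AG: "A \<subseteq> G" using A(2) by auto
    have SC: "?S \<subseteq> carrier P.B" using P.inC by auto
    obtain Ar r where Ar: "subgroup Ar P.B" "Ar \<subseteq> A" "Ar \<noteq> {\<one>\<^bsub>P.B\<^esub>}" "Factorial_Ring.prime r"
      and nAr: "\<forall>s\<in>?S. \<forall>a\<in>Ar. s \<otimes>\<^bsub>P.B\<^esub> a \<otimes>\<^bsub>P.B\<^esub> inv\<^bsub>P.B\<^esub> s \<in> Ar"
      and pp: "\<forall>q. Factorial_Ring.prime q \<and> q dvd card Ar \<longrightarrow> q = r"
      using P.Ar_exists[OF A(1) A(3) AG cA nA SC] by blast
    have ArS: "Ar \<subseteq> ?S" using Ar(2) A(2) by blast
    have cAr: "\<forall>a\<in>Ar. \<forall>b\<in>Ar. a \<otimes>\<^bsub>P.B\<^esub> b = b \<otimes>\<^bsub>P.B\<^esub> a" using cA Ar(2) by blast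
    have fx: "\<forall>y\<in>\<Omega>. (\<forall>b\<in>Ar. b y = y) \<longrightarrow> y = x"
      by (rule P.Ar_fix[OF x(1) tr mx N(1) N(2) cN nN trN Ar(1) ArS Ar(3) nAr])
    have trA: "\<forall>y\<in>\<Omega>-{x}. \<forall>z\<in>\<Omega>-{x}. \<exists>b\<in>Ar. b y = z"
      by (rule P.Ar_trans[OF x(1) Ar(1) ArS pp Ar(4) fx p])
    have "g = \<one>\<^bsub>P.B\<^esub>"
      by (rule P.final_fix[OF x(1) Ar(1) ArS cAr nAr trA p gG x(2) y])
    thus False using g1 by simp
  qed
qed

end
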